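(* Let $G_1,G_2$ be ordered graphs, and let $L_1,L_2$ be the lengths of the longest monotone paths in $G_1,G_2$ respectively. Then the length of the longest monotone path in the lexicographic product $G_1\otimes G_2$ is exactly $L_1L_2$.
   Context: An ordered graph is a finite graph with a linear order on its vertex set. A path $v_1,\dots,v_L$ in an ordered graph is monotone if $v_1<v_2<\dots<v_L$ in the order; its length is its number of vertices. The lexicographic product $G_1\otimes G_2$ is the ordered graph on vertex set $V(G_2)\times V(G_1)$, ordered lexicographically with the $G_2$-coordinate compared first, in which $(u,x)$ and $(w,y)$ are adjacent if and only if either $u\neq w$ and $uw\in E(G_2)$, or $u=w$ and $xy\in E(G_1)$. (Equivalently: each vertex of $G_2$ is blown up into an interval of $|G_1|$ vertices, edges of $G_2$ become complete bipartite graphs between blowup sets, and a copy of $G_1$ is placed in each blowup set.) *)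

theory Defs
  imports Main "HOL-Library.Product_Lexorder"
begin

text \<open>An ordered graph: finite vertex set V inside a linearly ordered type
(the linear order on V is the restriction of the type's order), with a symmetric,
irreflexive adjacency relation E supported on V.\<close>
definition ordered_graph :: "'a::linorder set \<Rightarrow> ('a \<Rightarrow> 'a \<Rightarrow> bool) \<Rightarrow> bool" where
  "ordered_graph V E \<longleftrightarrow> finite V \<and> (\<forall>x y. E x y \<longrightarrow> x \<in> V \<and> y \<in> V)
     \<and> (\<forall>x y. E x y \<longrightarrow> E y x) \<and> (\<forall>x. \<not> E x x)"

text \<open>A monotone path v_1 < v_2 < ... < v_L, consecutive vertices adjacent;
its length is its number of vertices.\<close>
definition monotone_path :: "'a::linorder set \<Rightarrow> ('a \<Rightarrow> 'a \<Rightarrow> bool) \<Rightarrow> 'a list \<Rightarrow> bool" where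
  "monotone_path V E vs \<longleftrightarrow> vs \<noteq> [] \<and> set vs \<subseteq> V \<and> sorted_wrt (<) vs
     \<and> (\<forall>i. Suc i < length vs \<longrightarrow> E (vs ! i) (vs ! Suc i))"

definition longest_monotone_path :: "'a::linorder set \<Rightarrow> ('a \<Rightarrow> 'a \<Rightarrow> bool) \<Rightarrow> nat" where
  "longest_monotone_path V E = Max (insert 0 {length vs | vs. monotone_path V E vs})"

text \<open>Lexicographic product G1 \<otimes> G2 on V2 \<times> V1; pairs are ordered lexicographically
(first coordinate, the G2-coordinate, compared first) by Product_Lexorder.\<close>
definition lex_prod_vertices :: "'a set \<Rightarrow> 'b set \<Rightarrow> ('b \<times> 'a) set" where
  "lex_prod_vertices V1 V2 = V2 \<times> V1"

definition lex_prod_edges :: "('a \<Rightarrow> 'a \<Rightarrow> bool) \<Rightarrow> ('b \<Rightarrow> 'b \<Rightarrow> bool)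
    \<Rightarrow> ('b \<times> 'a) \<Rightarrow> ('b \<times> 'a) \<Rightarrow> bool" where
  "lex_prod_edges E1 E2 p q \<longleftrightarrow>
     (fst p \<noteq> fst q \<and> E2 (fst p) (fst q)) \<or> (fst p = fst q \<and> E1 (snd p) (snd q))"

end

theory Submission
  imports Defs
begin

definition mrel :: "('a::linorder \<Rightarrow> 'a \<Rightarrow> bool) \<Rightarrow> 'a \<Rightarrow> 'a \<Rightarrow> bool" where
  "mrel E x y \<longleftrightarrow> x < y \<and> E x y"

lemma mp_alt:
  "monotone_path V E vs \<longleftrightarrow> vs \<noteq> [] \<and> set vs \<subseteq> V \<and> successively (mrel E) vs"
proof -
  have "sorted_wrt (<) vs \<longleftrightarrow> successively (<) vs"
    by (simp add: successively_conv_sorted_wrt transp_def)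
  then show ?thesis
    unfolding monotone_path_def mrel_def successively_conv_nth by blast
qed

lemma mp_len_le:
  assumes "finite V" "monotone_path V E vs"
  shows "length vs \<le> longest_monotone_path V E"
proof -
  have S: "{length vs | vs. monotone_path V E vs} \<subseteq> {..card V}"
  proof
    fix n assume "n \<in> {length vs | vs. monotone_path V E vs}"
    then obtain ws where "n = length ws" "monotone_path V E ws" by blast
    then have "distinct ws" "set ws \<subseteq> V"
      by (auto simp: monotone_path_def strict_sorted_iff)
    then have "length ws \<le> card V" using assms(1)
      by (metis card_mono distinct_card)
    then show "n \<in> {..card V}" using \<open>n = length ws\<close> by simp
  qed
  have "finite (insert 0 {length vs | vs. monotone_path V E vs})"
    using finite_subset[OF S] by simp
  then show ?thesis unfolding longest_monotone_path_def
    using assms(2) by (intro Max_ge) auto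
qed

lemma mp_exists:
  assumes "finite V" "longest_monotone_path V E > 0"
  shows "\<exists>vs. monotone_path V E vs \<and> length vs = longest_monotone_path V E"
proof -
  have S: "{length vs | vs. monotone_path V E vs} \<subseteq> {..card V}"
  proof
    fix n assume "n \<in> {length vs | vs. monotone_path V E vs}"
    then obtain ws where "n = length ws" "monotone_path V E ws" by blast
    then have "distinct ws" "set ws \<subseteq> V"
      by (auto simp: monotone_path_def strict_sorted_iff)
    then have "length ws \<le> card V" using assms(1)
      by (metis card_mono distinct_card)
    then show "n \<in> {..card V}" using \<open>n = length ws\<close> by simp
  qed
  have fin: "finite (insert 0 {length vs | vs. monotone_path V E vs})"
    using finite_subset[OF S] by simp
  have "longest_monotone_path V E \<in> insert 0 {length vs | vs. monotone_path V E vs}"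
    unfolding longest_monotone_path_def using fin by (intro Max_in) auto
  then show ?thesis using assms(2) by auto
qed

lemma upper_aux:
  assumes g1: "ordered_graph V1 E1"
  shows "monotone_path (lex_prod_vertices V1 V2) (lex_prod_edges E1 E2) vs \<Longrightarrow>
    \<exists>ps qs. monotone_path V2 E2 ps \<and> hd ps = fst (hd vs) \<and>
       monotone_path V1 E1 qs \<and> hd qs = snd (hd vs) \<and>
       length vs \<le> longest_monotone_path V1 E1 * (length ps - 1) + length qs"
proof (induction vs rule: induct_list012)
  case 1 then show ?case by (simp add: monotone_path_def)
next
  case (2 v)
  then have "fst v \<in> V2" "snd v \<in> V1"
    by (auto simp: monotone_path_def lex_prod_vertices_def)
  then show ?case
    by (intro exI[of _ "[fst v]"] exI[of _ "[snd v]"]) (auto simp: mp_alt)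
next
  case (3 v w ws)
  let ?L1 = "longest_monotone_path V1 E1"
  have fin1: "finite V1" using g1 by (simp add: ordered_graph_def)
  from "3.prems" have P: "monotone_path (lex_prod_vertices V1 V2) (lex_prod_edges E1 E2) (w # ws)"
    and vw: "v < w" "lex_prod_edges E1 E2 v w" and vV: "fst v \<in> V2" "snd v \<in> V1"
    by (auto simp: mp_alt mrel_def lex_prod_vertices_def mem_Times_iff)
  from "3.IH"(2)[OF P] obtain ps qs where
    ps: "monotone_path V2 E2 ps" "hd ps = fst w" and
    qs: "monotone_path V1 E1 qs" "hd qs = snd w" and
    len: "length (w # ws) \<le> ?L1 * (length ps - 1) + length qs" by auto
  have qL: "length qs \<le> ?L1" using mp_len_le[OF fin1 qs(1)] .
  have psne: "ps \<noteq> []" using ps by (simp add: monotone_path_def)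
  have qsne: "qs \<noteq> []" using qs by (simp add: monotone_path_def)
  show ?case
  proof (cases "fst v = fst w")
    case True
    with vw have "snd v < snd w" "E1 (snd v) (snd w)"
      by (auto simp: lex_prod_edges_def less_prod_def)
    then have "monotone_path V1 E1 (snd v # qs)"
      using qs qsne vV unfolding mp_alt
      by (auto simp: successively_Cons mrel_def)
    then show ?thesis using ps True len qs
      by (intro exI[of _ ps] exI[of _ "snd v # qs"]) auto
  next
    case False
    with vw have "fst v < fst w" "E2 (fst v) (fst w)"
      by (auto simp: lex_prod_edges_def less_prod_def)
    then have M: "monotone_path V2 E2 (fst v # ps)"
      using ps psne vV unfolding mp_alt
      by (auto simp: successively_Cons mrel_def)
    have "monotone_path V1 E1 [snd v]" using vV by (simp add: mp_alt)
    moreover have "length (v # w # ws) \<le> ?L1 * (length (fst v # ps) - 1) + length [snd v]"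
    proof -
      have "length (v # w # ws) = 1 + length (w # ws)" by simp
      also have "\<dots> \<le> 1 + ?L1 * (length ps - 1) + ?L1" using len qL by simp
      also have "\<dots> = 1 + ?L1 * length ps" using psne
        by (cases "length ps") auto
      finally show ?thesis by simp
    qed
    ultimately show ?thesis using M
      by (intro exI[of _ "fst v # ps"] exI[of _ "[snd v]"]) auto
  qed
qed

lemma block_path:
  assumes "monotone_path V1 E1 xs" "u \<in> V2"
  shows "monotone_path (lex_prod_vertices V1 V2) (lex_prod_edges E1 E2) (map (\<lambda>x. (u, x)) xs)"
  using assms unfolding mp_alt
  by (auto simp: successively_map mrel_def lex_prod_vertices_def lex_prod_edges_def
      less_prod_def intro: successively_mono)

lemma lower_aux:
  assumes xs: "monotone_path V1 E1 xs"
  shows "monotone_path V2 E2 us \<Longrightarrow>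
    monotone_path (lex_prod_vertices V1 V2) (lex_prod_edges E1 E2)
      (concat (map (\<lambda>u. map (\<lambda>x. (u, x)) xs) us))"
proof (induction us rule: induct_list012)
  case 1 then show ?case by (simp add: monotone_path_def)
next
  case (2 u)
  then show ?case using block_path[OF xs] by (simp add: mp_alt)
next
  case (3 u u' us)
  have xsne: "xs \<noteq> []" using xs by (simp add: monotone_path_def)
  from "3.prems" have P: "monotone_path V2 E2 (u' # us)" and uu: "u < u'" "E2 u u'" "u \<in> V2"
    by (auto simp: mp_alt mrel_def)
  have R: "monotone_path (lex_prod_vertices V1 V2) (lex_prod_edges E1 E2)
      (concat (map (\<lambda>u. map (\<lambda>x. (u, x)) xs) (u' # us)))" using "3.IH"(2)[OF P] .
  have B: "monotone_path (lex_prod_vertices V1 V2) (lex_prod_edges E1 E2) (map (\<lambda>x. (u, x)) xs)"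
    using block_path[OF xs uu(3)] .
  have "hd (concat (map (\<lambda>u. map (\<lambda>x. (u, x)) xs) (u' # us))) = (u', hd xs)"
    using xsne by (cases xs) auto
  moreover have "last (map (\<lambda>x. (u, x)) xs) = (u, last xs)" using xsne by (simp add: last_map)
  moreover have "mrel (lex_prod_edges E1 E2) (u, last xs) (u', hd xs)"
    using uu by (auto simp: mrel_def lex_prod_edges_def less_prod_def)
  ultimately show ?case using R B xsne
    unfolding mp_alt by (auto simp: successively_append_iff)
qed

theorem proposition3p2:
  fixes V1 :: "'a::linorder set" and E1 :: "'a \<Rightarrow> 'a \<Rightarrow> bool"
    and V2 :: "'b::linorder set" and E2 :: "'b \<Rightarrow> 'b \<Rightarrow> bool"
  assumes "ordered_graph V1 E1" and "ordered_graph V2 E2"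
  shows "longest_monotone_path (lex_prod_vertices V1 V2) (lex_prod_edges E1 E2)
           = longest_monotone_path V1 E1 * longest_monotone_path V2 E2"
proof -
  let ?V = "lex_prod_vertices V1 V2" and ?E = "lex_prod_edges E1 E2"
  let ?L1 = "longest_monotone_path V1 E1" and ?L2 = "longest_monotone_path V2 E2"
  have f1: "finite V1" and f2: "finite V2" using assms by (auto simp: ordered_graph_def)
  have f: "finite ?V" using f1 f2 by (simp add: lex_prod_vertices_def)
  have up: "longest_monotone_path ?V ?E \<le> ?L1 * ?L2"
  proof (cases "longest_monotone_path ?V ?E > 0")
    case True
    from mp_exists[OF f True] obtain vs where vs: "monotone_path ?V ?E vs"
      "length vs = longest_monotone_path ?V ?E" by blast
    from upper_aux[OF assms(1) vs(1)] obtain ps qs where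
      ps: "monotone_path V2 E2 ps" and qs: "monotone_path V1 E1 qs" and
      len: "length vs \<le> ?L1 * (length ps - 1) + length qs" by blast
    have a: "length ps \<le> ?L2" using mp_len_le[OF f2 ps] .
    have b: "length qs \<le> ?L1" using mp_len_le[OF f1 qs] .
    have c: "length ps \<ge> 1" using ps by (cases ps) (auto simp: monotone_path_def)
    have "?L1 * (length ps - 1) + length qs \<le> ?L1 * (?L2 - 1) + ?L1"
      using a b c by (intro add_mono mult_le_mono2) auto
    also have "\<dots> = ?L1 * ?L2" using a c
      by (cases ?L2) (auto simp: algebra_simps)
    finally show ?thesis using len vs(2) by simp
  qed simp
  have low: "?L1 * ?L2 \<le> longest_monotone_path ?V ?E"
  proof (cases "?L1 > 0 \<and> ?L2 > 0")
    case True
    from mp_exists[OF f1] True obtain xs where xs: "monotone_path V1 E1 xs" "length xs = ?L1" by blast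
    from mp_exists[OF f2] True obtain us where us: "monotone_path V2 E2 us" "length us = ?L2" by blast
    have M: "monotone_path ?V ?E (concat (map (\<lambda>u. map (\<lambda>x. (u, x)) xs) us))"
      using lower_aux[OF xs(1) us(1)] .
    have "length (concat (map (\<lambda>u. map (\<lambda>x. (u, x)) xs) us)) = ?L1 * ?L2"
      using xs(2) us(2) by (simp add: length_concat comp_def sum_list_triv mult.commute)
    then show ?thesis using mp_len_le[OF f M] by simp
  qed auto
  show ?thesis using up low by simp
qed

end
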